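(* Let $q\in\{2,4\}$, let $n,\kappa,d$ be positive integers with $1\le\kappa<n$, let $\ell=\lceil\log_q 2(n-\kappa+1)\rceil$, and assume $n-\kappa-1\ge 2\ell$. Then there exists a $\kappa$-WMU code $\mathcal{C}\subseteq\mathbb{F}_q^n$ with minimum Hamming distance $d$ and \[ |\mathcal{C}|\ge c_q\,\frac{q^n}{(n-\kappa+1)(\mathcal{L}_0-\mathcal{L}_1-\mathcal{L}_2)},\qquad c_q=\frac{(q-1)^2(2q-1)}{4q^4}, \] where \[ \mathcal{L}_0=\mathcal{V}_q(n-\ell-1,d-1)+(q-2)\mathcal{V}_q(n-\ell-1,d-2), \] \[ \mathcal{L}_1=(q-1)\sum_{i=\ell+2}^{n-\kappa-\ell+1}\sum_{j=0}^{i-\ell-2}\binom{i-\ell-2}{j}(q-2)^j\,\mathcal{V}_q(n-i-\ell+1,d-\ell-j-2), \] \[ \mathcal{L}_2=\sum_{i=0}^{n-\kappa-\ell}\binom{n-\kappa-\ell}{i}(q-2)^i\,\mathcal{V}_q(\kappa-1,d-i-2). \]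
   Context: $\mathbb{F}_q$ is the finite field with $q$ elements. $\mathcal{V}_q(m,r)=\sum_{i=0}^{r}\binom{m}{i}(q-1)^i$ is the size of a Hamming ball of radius $r$ in $\mathbb{F}_q^m$ (an empty sum, i.e. $r<0$, equals $0$); $0^0=1$. A code $\mathcal{C}\subseteq\mathbb{F}_q^n$ is $\kappa$-WMU ($1\le\kappa<n$) if for all not necessarily distinct $\mathbf{a},\mathbf{b}\in\mathcal{C}$ and all $\kappa\le l<n$, $(a_1,\dots,a_l)\ne(b_{n-l+1},\dots,b_n)$. The minimum Hamming distance of a code is the least number of coordinates in which two distinct codewords differ. *)

theory Defs
  imports Complex_Main
begin

text \<open>Words of \<open>\<bbbF>\<^sub>q\<^sup>n\<close> are lists of length n over a finite field type.\<close>

definition hamming_dist :: "'a list \<Rightarrow> 'a list \<Rightarrow> nat" where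
  "hamming_dist a b = card {i. i < length a \<and> a ! i \<noteq> b ! i}"

definition min_dist_ge :: "'a list set \<Rightarrow> nat \<Rightarrow> bool" where
  "min_dist_ge C d \<longleftrightarrow> (\<forall>a\<in>C. \<forall>b\<in>C. a \<noteq> b \<longrightarrow> d \<le> hamming_dist a b)"

definition is_WMU :: "nat \<Rightarrow> nat \<Rightarrow> 'a list set \<Rightarrow> bool" where
  "is_WMU \<kappa> n C \<longleftrightarrow> (\<forall>a\<in>C. \<forall>b\<in>C. \<forall>l. \<kappa> \<le> l \<and> l < n \<longrightarrow> take l a \<noteq> drop (n - l) b)"

definition vol :: "nat \<Rightarrow> nat \<Rightarrow> int \<Rightarrow> real" where
  "vol q m r = (if r < 0 then 0 else (\<Sum>i=0..nat r. real (m choose i) * (real q - 1) ^ i))"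

end

theory Submission
  imports Defs
begin


lemma hd_le_len: "hamming_dist a b \<le> length a"
proof -
  have "{i. i < length a \<and> a ! i \<noteq> b ! i} \<subseteq> {..<length a}" by auto
  then show ?thesis unfolding hamming_dist_def by (metis card_lessThan card_mono finite_lessThan)
qed

lemma hd_append:
  assumes "length a = length b"
  shows "hamming_dist (a @ c) (b @ e) = hamming_dist a b + hamming_dist c e"
proof -
  have eq: "{i. i < length (a@c) \<and> (a@c) ! i \<noteq> (b@e) ! i} =
     {i. i < length a \<and> a ! i \<noteq> b ! i} \<union> (\<lambda>i. i + length a) ` {i. i < length c \<and> c ! i \<noteq> e ! i}"
  proof (rule set_eqI, rule iffI)
    fix i assume "i \<in> {i. i < length (a@c) \<and> (a@c) ! i \<noteq> (b@e) ! i}"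
    then show "i \<in> {i. i < length a \<and> a ! i \<noteq> b ! i} \<union> (\<lambda>i. i + length a) ` {i. i < length c \<and> c ! i \<noteq> e ! i}"
    proof (cases "i < length a")
      case True
      then show ?thesis using assms \<open>i \<in> _\<close> by (auto simp: nth_append)
    next
      case False
      then have "i = (i - length a) + length a" by simp
      moreover have "i - length a < length c \<and> c ! (i - length a) \<noteq> e ! (i - length a)"
        using False assms \<open>i \<in> _\<close> by (auto simp: nth_append)
      ultimately show ?thesis by blast
    qed
  next
    fix i assume "i \<in> {i. i < length a \<and> a ! i \<noteq> b ! i} \<union> (\<lambda>i. i + length a) ` {i. i < length c \<and> c ! i \<noteq> e ! i}"
    then show "i \<in> {i. i < length (a@c) \<and> (a@c) ! i \<noteq> (b@e) ! i}"
      using assms by (auto simp: nth_append)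
  qed
  have "card ({i. i < length a \<and> a ! i \<noteq> b ! i} \<union> (\<lambda>i. i + length a) ` {i. i < length c \<and> c ! i \<noteq> e ! i})
     = card {i. i < length a \<and> a ! i \<noteq> b ! i} + card ((\<lambda>i. i + length a) ` {i. i < length c \<and> c ! i \<noteq> e ! i})"
    by (rule card_Un_disjoint) auto
  also have "card ((\<lambda>i. i + length a) ` {i. i < length c \<and> c ! i \<noteq> e ! i}) = card {i. i < length c \<and> c ! i \<noteq> e ! i}"
    by (rule card_image) (auto simp: inj_on_def)
  finally show ?thesis unfolding hamming_dist_def eq .
qed

lemma hd_single: "hamming_dist [a] [b] = (if a = b then 0 else 1)"
proof -
  have "{i. i < length [a] \<and> [a] ! i \<noteq> [b] ! i} = (if a = b then {} else {0})" by auto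
  then show ?thesis unfolding hamming_dist_def by simp
qed

lemma hd_Cons: "length c = length e \<Longrightarrow> hamming_dist (a # c) (b # e) = (if a = b then 0 else 1) + hamming_dist c e"
  using hd_append[of "[a]" "[b]" c e] hd_single[of a b] by simp

lemma hd_split: "length x = length y1 + length y2 \<Longrightarrow>
  hamming_dist x (y1 @ y2) = hamming_dist (take (length y1) x) y1 + hamming_dist (drop (length y1) x) y2"
  using hd_append[of "take (length y1) x" y1 "drop (length y1) x" y2] by simp

lemma hd_self: "hamming_dist a a = 0"
  unfolding hamming_dist_def by simp

lemma hd_sym: "length a = length b \<Longrightarrow> hamming_dist a b = hamming_dist b a"
  unfolding hamming_dist_def by metis

lemma finite_len: "finite {y::'a::finite list. length y = m}"
  using finite_lists_length_eq[of "UNIV::'a set" m] by simp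

lemma finite_len_sub: "Y \<subseteq> {y::'a::finite list. length y = m} \<Longrightarrow> finite Y"
  using finite_len finite_subset by blast

definition cube :: "'a list \<Rightarrow> (nat \<Rightarrow> 'a set) \<Rightarrow> nat \<Rightarrow> 'a list set" where
  "cube x A j = {y. length y = length x \<and> (\<forall>k<length x. y!k = x!k \<or> y!k \<in> A k) \<and> hamming_dist x y = j}"

lemma finite_cube: "finite (cube (x::'a::finite list) A j)"
  by (rule finite_len_sub[of _ "length x"]) (auto simp: cube_def)

lemma card_cube:
  fixes x :: "'a::finite list"
  assumes "\<forall>k<length x. x!k \<notin> A k \<and> card (A k) = a"
  shows "card (cube x A j) = (length x choose j) * a^j"
  using assms
proof (induction x arbitrary: A j)
  case Nil
  have "cube [] A j = (if j = 0 then {[]} else {})" unfolding cube_def hamming_dist_def by auto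
  then show ?case by simp
next
  case (Cons t xs)
  let ?B = "\<lambda>k. A (Suc k)"
  have pr: "\<forall>k<length xs. xs!k \<notin> ?B k \<and> card (?B k) = a"
    using Cons.prems by (simp add: All_less_Suc2)
  have IH: "\<And>j. card (cube xs ?B j) = (length xs choose j) * a^j"
    using Cons.IH[OF pr] .
  have t: "t \<notin> A 0" "card (A 0) = a" using Cons.prems by auto
  have eq: "cube (t#xs) A j = Cons t ` cube xs ?B j \<union>
     (if j = 0 then {} else (\<lambda>(s,ys). s#ys) ` (A 0 \<times> cube xs ?B (j-1)))"
  proof (rule set_eqI, rule iffI)
    fix y assume y: "y \<in> cube (t#xs) A j"
    then obtain s ys where ys: "y = s # ys" unfolding cube_def by (cases y) auto
    have l: "length ys = length xs" using y ys unfolding cube_def by auto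
    have c: "s = t \<or> s \<in> A 0" "\<forall>k<length xs. ys!k = xs!k \<or> ys!k \<in> ?B k"
      using y ys unfolding cube_def by (auto simp: All_less_Suc2)
    have h: "hamming_dist (t#xs) (s#ys) = j" using y ys unfolding cube_def by auto
    show "y \<in> Cons t ` cube xs ?B j \<union>
     (if j = 0 then {} else (\<lambda>(s,ys). s#ys) ` (A 0 \<times> cube xs ?B (j-1)))"
    proof (cases "s = t")
      case True
      then show ?thesis using h hd_Cons[of xs ys t s] l c ys unfolding cube_def by auto
    next
      case False
      then have "s \<in> A 0" using c by auto
      then show ?thesis using False h hd_Cons[of xs ys t s] l c ys unfolding cube_def by auto
    qed
  next
    fix y assume "y \<in> Cons t ` cube xs ?B j \<union>
     (if j = 0 then {} else (\<lambda>(s,ys). s#ys) ` (A 0 \<times> cube xs ?B (j-1)))"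
    then show "y \<in> cube (t#xs) A j"
    proof
      assume "y \<in> Cons t ` cube xs ?B j"
      then show ?thesis unfolding cube_def using hd_Cons[of xs _ t t] by (auto simp: All_less_Suc2)
    next
      assume a: "y \<in> (if j = 0 then {} else (\<lambda>(s,ys). s#ys) ` (A 0 \<times> cube xs ?B (j-1)))"
      then have "j > 0" by (auto split: if_splits)
      with a obtain s ys where "y = s#ys" "s \<in> A 0" "ys \<in> cube xs ?B (j-1)" by (auto split: if_splits)
      then show ?thesis unfolding cube_def using hd_Cons[of xs ys t s] t \<open>j>0\<close> by (auto simp: All_less_Suc2)
    qed
  qed
  show ?case
  proof (cases j)
    case 0
    then show ?thesis using eq IH by (simp add: card_image)
  next
    case (Suc j')
    have d: "Cons t ` cube xs ?B j \<inter> (\<lambda>(s,ys). s#ys) ` (A 0 \<times> cube xs ?B (j-1)) = {}" using t by auto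
    have "card (cube (t#xs) A j) = card (Cons t ` cube xs ?B j \<union> (\<lambda>(s,ys). s#ys) ` (A 0 \<times> cube xs ?B (j-1)))"
      using eq Suc by simp
    also have "\<dots> = card (Cons t ` cube xs ?B j) + card ((\<lambda>(s,ys). s#ys) ` (A 0 \<times> cube xs ?B (j-1)))"
      using d by (intro card_Un_disjoint finite_imageI finite_cube finite_cartesian_product) auto
    also have "\<dots> = card (cube xs ?B j) + card (A 0 \<times> cube xs ?B (j-1))"
      by (subst card_image, simp, subst card_image) (auto simp: inj_on_def)
    also have "\<dots> = (length xs choose j) * a^j + a * ((length xs choose j') * a^j')"
      using IH t Suc by (simp add: card_cartesian_product)
    also have "\<dots> = (length (t#xs) choose j) * a^j" using Suc by (simp add: algebra_simps)
    finally show ?thesis .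
  qed
qed



definition ballc :: "'a list \<Rightarrow> int \<Rightarrow> 'a list set" where
  "ballc x r = {y. length y = length x \<and> int (hamming_dist x y) \<le> r}"

lemma finite_ballc: "finite (ballc (x::'a::finite list) r)"
  by (rule finite_len_sub[of _ "length x"]) (auto simp: ballc_def)

lemma card_UNIV_minus1: "card (UNIV - {t::'a::finite}) = card (UNIV::'a set) - 1"
  by (simp add: card_Diff_singleton)

lemma card_ballc:
  fixes x :: "'a::finite list"
  shows "real (card (ballc x r)) = vol (card (UNIV::'a set)) (length x) r"
proof (cases "r < 0")
  case True
  then have "ballc x r = {}" unfolding ballc_def by auto
  then show ?thesis using True unfolding vol_def by simp
next
  case False
  let ?A = "\<lambda>k. UNIV - {x!k}"
  let ?q = "card (UNIV::'a set)"
  have q1: "?q \<ge> 1" by (simp add: Suc_leI finite_UNIV_card_ge_0)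
  have eq: "ballc x r = (\<Union>i\<in>{0..nat r}. cube x ?A i)"
    unfolding ballc_def cube_def using False by auto
  have "card (ballc x r) = (\<Sum>i\<in>{0..nat r}. card (cube x ?A i))"
    unfolding eq by (rule card_UN_disjoint) (auto simp: finite_cube, auto simp: cube_def)
  also have "\<dots> = (\<Sum>i\<in>{0..nat r}. (length x choose i) * (?q - 1)^i)"
    by (rule sum.cong) (auto intro!: card_cube simp: card_UNIV_minus1)
  finally have "real (card (ballc x r)) = (\<Sum>i\<in>{0..nat r}. real (length x choose i) * (real ?q - 1)^i)"
    using q1 by (simp add: of_nat_diff)
  then show ?thesis unfolding vol_def using False by simp
qed

lemma card_lists_pos:
  fixes B :: "nat \<Rightarrow> 'a::finite set"
  shows "card {y. length y = m \<and> (\<forall>k<m. y!k \<in> B k)} = (\<Prod>k<m. card (B k))"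
proof (induction m arbitrary: B)
  case 0
  have "{y::'a list. length y = 0 \<and> (\<forall>k<0. y!k \<in> B k)} = {[]}" by auto
  then show ?case by simp
next
  case (Suc m)
  have eq: "{y. length y = Suc m \<and> (\<forall>k<Suc m. y!k \<in> B k)} =
    (\<lambda>(s,ys). s#ys) ` (B 0 \<times> {y. length y = m \<and> (\<forall>k<m. y!k \<in> B (Suc k))})"
  proof (rule set_eqI, rule iffI)
    fix y assume a: "y \<in> {y. length y = Suc m \<and> (\<forall>k<Suc m. y!k \<in> B k)}"
    then obtain s ys where "y = s#ys" by (cases y) auto
    then show "y \<in> (\<lambda>(s,ys). s#ys) ` (B 0 \<times> {y. length y = m \<and> (\<forall>k<m. y!k \<in> B (Suc k))})"
      using a by (auto simp: All_less_Suc2)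
  next
    fix y assume "y \<in> (\<lambda>(s,ys). s#ys) ` (B 0 \<times> {y. length y = m \<and> (\<forall>k<m. y!k \<in> B (Suc k))})"
    then show "y \<in> {y. length y = Suc m \<and> (\<forall>k<Suc m. y!k \<in> B k)}"
      by (auto simp: All_less_Suc2)
  qed
  have "card {y. length y = Suc m \<and> (\<forall>k<Suc m. y!k \<in> B k)} =
     card (B 0 \<times> {y. length y = m \<and> (\<forall>k<m. y!k \<in> B (Suc k))})"
    unfolding eq by (rule card_image) (auto simp: inj_on_def)
  also have "\<dots> = card (B 0) * (\<Prod>k<m. card (B (Suc k)))"
    using Suc.IH[of "\<lambda>k. B (Suc k)"] by (simp add: card_cartesian_product)
  also have "\<dots> = (\<Prod>k<Suc m. card (B k))" by (simp only: prod.lessThan_Suc_shift)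
  finally show ?case .
qed

lemma prod_pattern:
  assumes "finite I" "Z \<subseteq> I" "N \<subseteq> I" "Z \<inter> N = {}"
  shows "(\<Prod>k\<in>I. if k \<in> Z then 1 else if k \<in> N then a else b) = (a::nat)^card N * b^(card I - card Z - card N)"
proof -
  let ?f = "\<lambda>k. if k \<in> Z then 1 else if k \<in> N then a else b"
  have fin: "finite Z" "finite N" using assms finite_subset by blast+
  have I: "I = Z \<union> (N \<union> (I - Z - N))" using assms by auto
  have "prod ?f I = prod ?f Z * (prod ?f N * prod ?f (I - Z - N))"
    apply (subst I)
    apply (subst prod.union_disjoint)
    using assms fin apply auto[3]
    apply (subst prod.union_disjoint)
    using assms fin by auto
  also have "prod ?f Z = 1" by (rule prod.neutral) auto
  also have "prod ?f N = prod (\<lambda>_. a) N" by (rule prod.cong) (use assms in auto)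
  also have "\<dots> = a ^ card N" by simp
  also have "prod ?f (I - Z - N) = prod (\<lambda>_. b) (I - Z - N)" by (rule prod.cong) auto
  also have "\<dots> = b ^ card (I - Z - N)" by simp
  also have "card (I - Z - N) = card I - card Z - card N"
  proof -
    have "I - Z - N = I - (Z \<union> N)" by auto
    moreover have "card (I - (Z \<union> N)) = card I - card (Z \<union> N)"
      using assms fin by (intro card_Diff_subset) auto
    moreover have "card (Z \<union> N) = card Z + card N" using assms fin by (simp add: card_Un_disjoint)
    ultimately show ?thesis by simp
  qed
  finally show ?thesis by simp
qed



definition zw :: "nat \<Rightarrow> 'a::zero list \<Rightarrow> nat \<Rightarrow> bool" where
  "zw l y s = (\<forall>k<l. y!(s+k) = 0)"

definition Sset :: "nat \<Rightarrow> nat \<Rightarrow> nat \<Rightarrow> 'a::zero list set" where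
  "Sset n \<kappa> l = {y. length y = n \<and> (\<forall>k<l. y!k = 0) \<and> y!l \<noteq> 0 \<and> y!(n-\<kappa>) \<noteq> 0 \<and>
      (\<forall>s. l+1 \<le> s \<and> s \<le> n-\<kappa>-l \<longrightarrow> \<not> zw l y s)}"

lemma S_WMU:
  assumes "C \<subseteq> Sset n \<kappa> l" "1 \<le> \<kappa>" "\<kappa> < n"
  shows "is_WMU \<kappa> n C"
  unfolding is_WMU_def
proof (intro ballI allI impI)
  fix a b l' assume ab: "a \<in> C" "b \<in> C" and l': "\<kappa> \<le> l' \<and> l' < n"
  have a: "length a = n" "\<forall>k<l. a!k = 0" "a!l \<noteq> 0" using assms ab unfolding Sset_def by auto
  have b: "length b = n" "\<forall>k<l. b!k = 0" "b!l \<noteq> 0" "b!(n-\<kappa>) \<noteq> 0"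
     "\<forall>s. l+1 \<le> s \<and> s \<le> n-\<kappa>-l \<longrightarrow> \<not> zw l b s" using assms ab unfolding Sset_def by auto
  show "take l' a \<noteq> drop (n - l') b"
  proof
    assume eq: "take l' a = drop (n - l') b"
    have nth: "a!k = b!(n-l'+k)" if "k < l'" for k
    proof -
      have "take l' a ! k = drop (n-l') b ! k" using eq by simp
      then show ?thesis using that l' a b by simp
    qed
    have "a!(l'-\<kappa>) = b!(n-\<kappa>)" using nth[of "l'-\<kappa>"] l' assms by simp
    then have "a!(l'-\<kappa>) \<noteq> 0" using b by simp
    then have ge: "l'-\<kappa> \<ge> l" using a by (meson not_le)
    have z: "b!(n-l'+k) = 0" if "k < l" for k using nth[of k] a that ge by simp
    show False
    proof (cases "n - l' \<le> l")
      case True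
      have k: "l-(n-l') < l" using True l' by linarith
      have "n-l'+(l-(n-l')) = l" using True by simp
      then have "b!(n-l'+(l-(n-l'))) = 0 \<and> n-l'+(l-(n-l')) = l" using z[OF k] by simp
      then show False using True b by simp
    next
      case False
      have "zw l b (n-l')" unfolding zw_def using z by simp
      moreover have "n - l' \<le> n-\<kappa>-l" using ge l' by linarith
      ultimately show False using b False by simp
    qed
  qed
qed

definition Alt :: "'a::{zero,one} \<Rightarrow> 'a set" where
  "Alt t = (if t = 0 then UNIV - {0,1} else UNIV - {0,t})"

lemma Alt_props: "t \<notin> Alt t" "0 \<notin> Alt t" by (auto simp: Alt_def)

lemma card_Alt: "card (Alt (t::'a::{field,finite})) = card (UNIV::'a set) - 2"
proof -
  have "card (UNIV - {0, if t = 0 then 1 else t}) = card (UNIV::'a set) - card {0::'a, if t = 0 then 1 else t}"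
    by (rule card_Diff_subset) auto
  moreover have "card {0::'a, if t = 0 then 1 else t} = 2" by auto
  moreover have "Alt t = UNIV - {0, if t = 0 then 1 else t}" by (auto simp: Alt_def)
  ultimately show ?thesis by simp
qed

lemma card_q_ge2: "card (UNIV::'a::{field,finite} set) \<ge> 2"
proof -
  have "card {0::'a,1} = 2" by simp
  moreover have "card {0::'a,1} \<le> card (UNIV::'a set)" by (rule card_mono) auto
  ultimately show ?thesis by simp
qed



lemma card_S_lower:
  assumes "1 \<le> l" "1 \<le> \<kappa>" "2*l + 1 + \<kappa> \<le> n"
  shows "real ((card (UNIV::'a::{field,finite} set) - 1)^2 * card (UNIV::'a set)^(n-l-2))
     - real (n-\<kappa>-2*l) * real ((card (UNIV::'a set) - 1)^2 * card (UNIV::'a set)^(n-2*l-2))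
     \<le> real (card (Sset n \<kappa> l :: 'a list set))"
proof -
  let ?q = "card (UNIV::'a set)"
  define N where "N = {l, n-\<kappa>}"
  have cN: "card N = 2" using assms unfolding N_def by auto
  have NI: "N \<subseteq> {..<n}" using assms unfolding N_def by auto
  define BG where "BG = (\<lambda>k. if k \<in> {..<l} then {0::'a} else if k \<in> N then UNIV - {0} else UNIV)"
  define G where "G = {y. length y = n \<and> (\<forall>k<n. y!k \<in> BG k)}"
  have cBG: "card (BG k) = (if k \<in> {..<l} then 1 else if k \<in> N then ?q - 1 else ?q)" for k
    unfolding BG_def by (simp add: card_UNIV_minus1)
  have "card G = (\<Prod>k<n. card (BG k))" unfolding G_def by (rule card_lists_pos)
  also have "\<dots> = (\<Prod>k<n. if k \<in> {..<l} then 1 else if k \<in> N then ?q - 1 else ?q)"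
    using cBG by simp
  also have "\<dots> = (?q - 1)^card N * ?q^(card {..<n} - card {..<l} - card N)"
    by (rule prod_pattern) (use assms NI in \<open>auto simp: N_def\<close>)
  also have "\<dots> = (?q - 1)^2 * ?q^(n-l-2)" using cN by simp
  finally have cG: "card G = (?q - 1)^2 * ?q^(n-l-2)" .
  define R where "R = {l+1..n-\<kappa>-l}"
  define BB where "BB = (\<lambda>s k. if k \<in> {..<l} \<union> {s..<s+l} then {0::'a} else if k \<in> N then UNIV - {0} else UNIV)"
  define Bad where "Bad = (\<lambda>s. {y. length y = n \<and> (\<forall>k<n. y!k \<in> BB s k)})"
  have cBad: "card (Bad s) = (?q - 1)^2 * ?q^(n-2*l-2)" if "s \<in> R" for s
  proof -
    have s: "l+1 \<le> s" "s \<le> n-\<kappa>-l" using that unfolding R_def by auto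
    have cBB: "card (BB s k) = (if k \<in> {..<l} \<union> {s..<s+l} then 1 else if k \<in> N then ?q - 1 else ?q)" for k
      unfolding BB_def by (simp add: card_UNIV_minus1)
    have cZ: "card ({..<l} \<union> {s..<s+l}) = 2*l" using s by (subst card_Un_disjoint) auto
    have "card (Bad s) = (\<Prod>k<n. card (BB s k))" unfolding Bad_def by (rule card_lists_pos)
    also have "\<dots> = (\<Prod>k<n. if k \<in> {..<l} \<union> {s..<s+l} then 1 else if k \<in> N then ?q - 1 else ?q)"
      using cBB by simp
    also have "\<dots> = (?q - 1)^card N * ?q^(card {..<n} - card ({..<l} \<union> {s..<s+l}) - card N)"
      by (rule prod_pattern) (use assms NI s in \<open>auto simp: N_def\<close>)
    also have "\<dots> = (?q - 1)^2 * ?q^(n-2*l-2)" using cN cZ by simp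
    finally show ?thesis .
  qed
  have sub: "G \<subseteq> Sset n \<kappa> l \<union> (\<Union>s\<in>R. Bad s)"
  proof
    fix y assume y: "y \<in> G"
    show "y \<in> Sset n \<kappa> l \<union> (\<Union>s\<in>R. Bad s)"
    proof (cases "y \<in> Sset n \<kappa> l")
      case True then show ?thesis by simp
    next
      case False
      have yy: "\<forall>k<n. y!k \<in> BG k" "length y = n" using y unfolding G_def by auto
      have yG: "length y = n" "\<forall>k<l. y!k = 0" "y!l \<noteq> 0" "y!(n-\<kappa>) \<noteq> 0"
      proof -
        show "length y = n" by fact
        show "\<forall>k<l. y!k = 0"
        proof (intro allI impI)
          fix k assume "k < l"
          moreover have "k < n" using \<open>k < l\<close> assms by linarith
          ultimately show "y!k = 0" using yy(1) unfolding BG_def by auto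
        qed
        have "y!l \<in> BG l" using yy(1) assms by auto
        then show "y!l \<noteq> 0" unfolding BG_def N_def by auto
        have "y!(n-\<kappa>) \<in> BG (n-\<kappa>)" using yy(1) assms by auto
        moreover have "\<not> n-\<kappa> < l" using assms by linarith
        ultimately show "y!(n-\<kappa>) \<noteq> 0" unfolding BG_def N_def by auto
      qed
      then obtain s where s: "l+1 \<le> s" "s \<le> n-\<kappa>-l" "zw l y s"
        using False unfolding Sset_def by auto
      have "y \<in> Bad s"
        unfolding Bad_def BB_def
      proof (intro CollectI conjI allI impI)
        show "length y = n" by fact
        fix k assume k: "k < n"
        show "y ! k \<in> (if k \<in> {..<l} \<union> {s..<s+l} then {0} else if k \<in> N then UNIV - {0} else UNIV)"
        proof (cases "k \<in> {s..<s+l}")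
          case True
          then have "k - s < l" by auto
          then have "y!(s + (k-s)) = 0" using s(3) unfolding zw_def by blast
          then show ?thesis using True by auto
        qed (use yG y k in \<open>auto simp: G_def BG_def\<close>)
      qed
      then show ?thesis using s unfolding R_def by auto
    qed
  qed
  have finS: "finite (Sset n \<kappa> l :: 'a list set)" by (rule finite_len_sub[of _ n]) (auto simp: Sset_def)
  have finB: "finite (Bad s)" for s by (rule finite_len_sub[of _ n]) (auto simp: Bad_def)
  have "card G \<le> card (Sset n \<kappa> l \<union> (\<Union>s\<in>R. Bad s))"
    by (rule card_mono) (use finS finB R_def sub in auto)
  also have "\<dots> \<le> card (Sset n \<kappa> l :: 'a list set) + card (\<Union>s\<in>R. Bad s)" by (rule card_Un_le)
  also have "card (\<Union>s\<in>R. Bad s) \<le> (\<Sum>s\<in>R. card (Bad s))" by (rule card_UN_le) (simp add: R_def)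
  also have "\<dots> = (\<Sum>s\<in>R. (?q - 1)^2 * ?q^(n-2*l-2))" by (rule sum.cong) (auto simp: cBad)
  also have "\<dots> = card R * ((?q - 1)^2 * ?q^(n-2*l-2))" by simp
  also have "card R = n-\<kappa>-2*l" unfolding R_def by simp
  finally have "card G \<le> card (Sset n \<kappa> l :: 'a list set) + (n-\<kappa>-2*l) * ((?q - 1)^2 * ?q^(n-2*l-2))" by simp
  then have "real (card G) \<le> real (card (Sset n \<kappa> l :: 'a list set)) + real (n-\<kappa>-2*l) * real ((?q - 1)^2 * ?q^(n-2*l-2))"
    by (metis of_nat_add of_nat_le_iff of_nat_mult)
  then show ?thesis using cG by linarith
qed



definition T0 :: "nat \<Rightarrow> nat \<Rightarrow> nat \<Rightarrow> 'a::zero list \<Rightarrow> 'a list set" where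
  "T0 n l d x = {y. length y = n \<and> (\<forall>k<l. y!k = 0) \<and> y!l \<noteq> 0 \<and> hamming_dist x y < d}"

definition mk1 :: "nat \<Rightarrow> ('a::zero list \<times> 'a) \<times> 'a list \<Rightarrow> 'a list" where
  "mk1 l p = replicate l 0 @ fst (fst p) @ [snd (fst p)] @ replicate l 0 @ snd p"

definition mk2 :: "nat \<Rightarrow> 'a::zero list \<times> 'a list \<Rightarrow> 'a list" where
  "mk2 l p = replicate l 0 @ fst p @ [0] @ snd p"

lemma inj_mk1: "inj_on (mk1 l) {p. length (fst (fst p)) = m}"
proof (rule inj_onI)
  fix a b :: "('a::zero list \<times> 'a) \<times> 'a list"
  assume A: "a \<in> {p. length (fst (fst p)) = m}" "b \<in> {p. length (fst (fst p)) = m}" and E: "mk1 l a = mk1 l b"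
  have l: "length (fst (fst a)) = length (fst (fst b))" using A by simp
  have e: "fst (fst a) @ (snd (fst a) # replicate l 0 @ snd a) = fst (fst b) @ (snd (fst b) # replicate l 0 @ snd b)"
    using E unfolding mk1_def by simp
  have "fst (fst a) = fst (fst b) \<and> snd (fst a) # replicate l 0 @ snd a = snd (fst b) # replicate l 0 @ snd b"
    using iffD1[OF append_eq_append_conv[OF disjI1[OF l]] e] .
  then have "fst (fst a) = fst (fst b)" "snd (fst a) = snd (fst b)" "snd a = snd b" by simp_all
  then show "a = b" by (simp add: prod_eq_iff)
qed

lemma inj_mk2: "inj_on (mk2 l) {p. length (fst p) = m}"
proof (rule inj_onI)
  fix a b :: "'a::zero list \<times> 'a list"
  assume A: "a \<in> {p. length (fst p) = m}" "b \<in> {p. length (fst p) = m}" and E: "mk2 l a = mk2 l b"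
  have l: "length (fst a) = length (fst b)" using A by simp
  have e: "fst a @ (0 # snd a) = fst b @ (0 # snd b)"
    using E unfolding mk2_def by simp
  have "fst a = fst b \<and> 0 # snd a = 0 # snd b"
    using iffD1[OF append_eq_append_conv[OF disjI1[OF l]] e] .
  then show "a = b" by (simp add: prod_eq_iff)
qed

definition T1 :: "nat \<Rightarrow> nat \<Rightarrow> 'a::{zero,one} list \<Rightarrow> nat \<Rightarrow> nat \<Rightarrow> 'a list set" where
  "T1 l d x i j = mk1 l `
     ((cube (take (i-l-2) (drop l x)) (\<lambda>k. Alt (x!(l+k))) j \<times> (UNIV - {0})) \<times>
       ballc (drop (i+l-1) x) (int d - int l - int j - 2))"

definition T2 :: "nat \<Rightarrow> nat \<Rightarrow> nat \<Rightarrow> nat \<Rightarrow> 'a::{zero,one} list \<Rightarrow> nat \<Rightarrow> 'a list set" where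
  "T2 n \<kappa> l d x j = mk2 l `
     (cube (take (n-\<kappa>-l) (drop l x)) (\<lambda>k. Alt (x!(l+k))) j \<times> ballc (drop (n-\<kappa>+1) x) (int d - int j - 2))"

context
  fixes n \<kappa> l d :: nat and x :: "'a::{field,finite} list"
  assumes A: "1 \<le> l" "1 \<le> \<kappa>" "2*l + 1 + \<kappa> \<le> n" "0 < d" and xS: "x \<in> Sset n \<kappa> l"
begin

lemma x_props: "length x = n" "\<forall>k<l. x!k = 0" "x!l \<noteq> 0" "x!(n-\<kappa>) \<noteq> 0"
   "\<And>s. l+1 \<le> s \<Longrightarrow> s \<le> n-\<kappa>-l \<Longrightarrow> \<not> zw l x s"
  using xS unfolding Sset_def by auto

lemma take_x: "take l x = replicate l 0"
  by (rule nth_equalityI) (use x_props A in auto)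

lemma cube_mem:
  assumes "u \<in> cube (take m (drop l x)) (\<lambda>k. Alt (x!(l+k))) j" "m \<le> n - l"
  shows "length u = m" "\<And>t. t < m \<Longrightarrow> u!t = 0 \<Longrightarrow> x!(l+t) = 0"
    "hamming_dist (take m (drop l x)) u = j"
proof -
  show "length u = m" using assms x_props A unfolding cube_def by auto
  show "hamming_dist (take m (drop l x)) u = j" using assms unfolding cube_def by auto
  fix t assume t: "t < m" "u!t = 0"
  have "u!t = take m (drop l x) ! t \<or> u!t \<in> Alt (x!(l+t))"
    using assms t x_props unfolding cube_def by auto
  then show "x!(l+t) = 0" using t Alt_props[of "x!(l+t)"] x_props assms by auto
qed

lemma T1_props:
  assumes i: "l+2 \<le> i" "i \<le> n-\<kappa>-l+1" and y: "y \<in> T1 l d x i j"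
  shows "y \<in> T0 n l d x" "zw l y (i-1)" "\<And>s. l+1 \<le> s \<Longrightarrow> s < i-1 \<Longrightarrow> \<not> zw l y s"
proof -
  define m where "m = i-l-2"
  have m: "i = m+l+2" using i unfolding m_def by simp
  obtain u c w where yy: "y = replicate l 0 @ u @ [c] @ replicate l 0 @ w"
    and u: "u \<in> cube (take m (drop l x)) (\<lambda>k. Alt (x!(l+k))) j" and c: "c \<noteq> 0"
    and w: "w \<in> ballc (drop (m+2*l+1) x) (int d - int l - int j - 2)"
  proof -
    obtain p where p: "p \<in> (cube (take (i-l-2) (drop l x)) (\<lambda>k. Alt (x!(l+k))) j \<times> (UNIV - {0})) \<times>
       ballc (drop (i+l-1) x) (int d - int l - int j - 2)" and yp: "y = mk1 l p"
      using y unfolding T1_def by (rule imageE)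
    have e1: "i-l-2 = m" and e2: "i+l-1 = m+2*l+1" using m by simp_all
    have p1: "fst (fst p) \<in> cube (take m (drop l x)) (\<lambda>k. Alt (x!(l+k))) j"
      using p unfolding e1 by (simp add: mem_Times_iff)
    have p2: "snd (fst p) \<noteq> 0" using p by (simp add: mem_Times_iff)
    have p3: "snd p \<in> ballc (drop (m+2*l+1) x) (int d - int l - int j - 2)"
      using p unfolding e2 by (simp add: mem_Times_iff)
    have p4: "y = replicate l 0 @ fst (fst p) @ [snd (fst p)] @ replicate l 0 @ snd p"
      using yp unfolding mk1_def .
    show ?thesis by (rule that[OF p4 p1 p2 p3])
  qed
  have mle: "m + 2*l + 1 \<le> n - \<kappa>" using i m by linarith
  have mle2: "m \<le> n - l" using mle by linarith
  have lu: "length u = m" using cube_mem(1)[OF u mle2] .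
  have uz: "\<And>t. t < m \<Longrightarrow> u!t = 0 \<Longrightarrow> x!(l+t) = 0" using cube_mem(2)[OF u mle2] by blast
  have hu: "hamming_dist (take m (drop l x)) u = j" using cube_mem(3)[OF u mle2] .
  have lw: "length w = n - (m+2*l+1)" and hw: "int (hamming_dist (drop (m+2*l+1) x) w) \<le> int d - int l - int j - 2"
    using w x_props unfolding ballc_def by auto
  have ly: "length y = n" using yy lu lw mle by simp
  have y0: "\<forall>k<l. y!k = 0" using yy by (auto simp: nth_append)
  have yl: "y!l \<noteq> 0"
  proof (cases "m = 0")
    case True
    then show ?thesis using yy lu c by (simp add: nth_append)
  next
    case False
    then have "u!0 \<noteq> 0" using uz[of 0] x_props by auto
    then show ?thesis using yy lu False by (simp add: nth_append)
  qed
  have lx: "length x = n" using x_props by simp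
  have h1: "hamming_dist x y = hamming_dist (take l x) (replicate l 0) + hamming_dist (drop l x) (u @ [c] @ replicate l 0 @ w)"
    using hd_split[of x "replicate l 0" "u @ [c] @ replicate l 0 @ w"] lx lu lw mle unfolding yy by simp
  have h2: "hamming_dist (drop l x) (u @ [c] @ replicate l 0 @ w) = hamming_dist (take m (drop l x)) u + hamming_dist (drop (l+m) x) ([c] @ replicate l 0 @ w)"
    using hd_split[of "drop l x" u "[c] @ replicate l 0 @ w"] lx lu lw mle by (simp add: add.commute)
  have h3: "hamming_dist (drop (l+m) x) ([c] @ replicate l 0 @ w) = hamming_dist (take 1 (drop (l+m) x)) [c] + hamming_dist (drop (l+m+1) x) (replicate l 0 @ w)"
    using hd_split[of "drop (l+m) x" "[c]" "replicate l 0 @ w"] lx lu lw mle by (simp add: add.commute add.left_commute)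
  have h4: "hamming_dist (drop (l+m+1) x) (replicate l 0 @ w) = hamming_dist (take l (drop (l+m+1) x)) (replicate l 0) + hamming_dist (drop (m+2*l+1) x) w"
    using hd_split[of "drop (l+m+1) x" "replicate l 0" w] lx lu lw mle by (simp add: add.commute add.left_commute mult_2)
  have b3: "hamming_dist (take 1 (drop (l+m) x)) [c] \<le> 1" using hd_le_len[of "take 1 (drop (l+m) x)" "[c]"] by simp
  have b4: "hamming_dist (take l (drop (l+m+1) x)) (replicate l 0) \<le> l" using hd_le_len[of "take l (drop (l+m+1) x)"] by simp
  have "int (hamming_dist x y) \<le> int d - 1"
    using h1 h2 h3 h4 b3 b4 hw hu take_x hd_self[of "replicate l (0::'a)"] by simp
  then have hd: "hamming_dist x y < d" by simp
  show "y \<in> T0 n l d x" unfolding T0_def using ly y0 yl hd by simp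
  show "zw l y (i-1)" unfolding zw_def m using yy lu by (auto simp: nth_append)
  fix s assume s: "l+1 \<le> s" "s < i-1"
  show "\<not> zw l y s"
  proof
    assume z: "zw l y s"
    show False
    proof (cases "l + m < s + l")
      case True
      have "l+m-s < l" using True s A(1) by arith
      then have "y!(s+(l+m-s)) = 0" using z unfolding zw_def by blast
      moreover have "s+(l+m-s) = l+m" using s m by arith
      ultimately have "y!(l+m) = 0" by simp
      then show False using yy lu c by (simp add: nth_append)
    next
      case False
      have "x!(s+k) = 0" if k: "k < l" for k
      proof -
        have "y!(s+k) = 0" using z k unfolding zw_def by blast
        moreover have "l \<le> s+k" "s+k-l < m" using k False s by arith+
        moreover have "y!(s+k) = u!(s+k-l)" using yy lu calculation(2,3) by (simp add: nth_append)
        ultimately have "x!(l+(s+k-l)) = 0" using uz[of "s+k-l"] by simp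
        then show ?thesis using s by simp
      qed
      then have "zw l x s" unfolding zw_def by simp
      moreover have "s \<le> n-\<kappa>-l" using False mle by linarith
      ultimately show False using x_props(5) s by blast
    qed
  qed
qed

lemma T2_props:
  assumes y: "y \<in> T2 n \<kappa> l d x j"
  shows "y \<in> T0 n l d x" "y!(n-\<kappa>) = 0" "\<And>s. l+1 \<le> s \<Longrightarrow> s \<le> n-\<kappa>-l \<Longrightarrow> \<not> zw l y s"
proof -
  define m where "m = n-\<kappa>-l"
  obtain u w where yy: "y = replicate l 0 @ u @ [0] @ w"
    and u: "u \<in> cube (take m (drop l x)) (\<lambda>k. Alt (x!(l+k))) j"
    and w: "w \<in> ballc (drop (n-\<kappa>+1) x) (int d - int j - 2)"
  proof -
    obtain p where p: "p \<in> cube (take m (drop l x)) (\<lambda>k. Alt (x!(l+k))) j \<times> ballc (drop (n-\<kappa>+1) x) (int d - int j - 2)"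
      and yp: "y = mk2 l p"
      using y unfolding T2_def m_def by (rule imageE)
    have p1: "fst p \<in> cube (take m (drop l x)) (\<lambda>k. Alt (x!(l+k))) j"
      using p by (simp add: mem_Times_iff)
    have p3: "snd p \<in> ballc (drop (n-\<kappa>+1) x) (int d - int j - 2)"
      using p by (simp add: mem_Times_iff)
    have p4: "y = replicate l 0 @ fst p @ [0] @ snd p"
      using yp unfolding mk2_def .
    show ?thesis by (rule that[OF p4 p1 p3])
  qed
  have mle2: "m \<le> n - l" unfolding m_def by simp
  have m1: "1 \<le> m" "l + m = n - \<kappa>" using A unfolding m_def by arith+
  have lu: "length u = m" using cube_mem(1)[OF u mle2] .
  have uz: "\<And>t. t < m \<Longrightarrow> u!t = 0 \<Longrightarrow> x!(l+t) = 0" using cube_mem(2)[OF u mle2] by blast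
  have hu: "hamming_dist (take m (drop l x)) u = j" using cube_mem(3)[OF u mle2] .
  have lw: "length w = n - (n-\<kappa>+1)" and hw: "int (hamming_dist (drop (n-\<kappa>+1) x) w) \<le> int d - int j - 2"
    using w x_props unfolding ballc_def by auto
  have ly: "length y = n" using yy lu lw m1 A by simp
  have y0: "\<forall>k<l. y!k = 0" using yy by (auto simp: nth_append)
  have "u!0 \<noteq> 0" using uz[of 0] x_props m1 by auto
  then have yl: "y!l \<noteq> 0" using yy lu m1 by (simp add: nth_append)
  show "y!(n-\<kappa>) = 0" using yy lu m1 by (simp add: nth_append flip: m1(2))
  have lx: "length x = n" using x_props by simp
  have h1: "hamming_dist x y = hamming_dist (take l x) (replicate l 0) + hamming_dist (drop l x) (u @ [0] @ w)"
    using hd_split[of x "replicate l 0" "u @ [0] @ w"] lx lu lw m1 A unfolding yy by simp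
  have h2: "hamming_dist (drop l x) (u @ [0] @ w) = hamming_dist (take m (drop l x)) u + hamming_dist (drop (l+m) x) ([0] @ w)"
    using hd_split[of "drop l x" u "[0] @ w"] lx lu lw m1 A by (simp add: add.commute)
  have h3: "hamming_dist (drop (l+m) x) ([0] @ w) = hamming_dist (take 1 (drop (l+m) x)) [0] + hamming_dist (drop (l+m+1) x) w"
    using hd_split[of "drop (l+m) x" "[0]" w] lx lu lw m1 A by (simp add: add.commute add.left_commute)
  have b3: "hamming_dist (take 1 (drop (l+m) x)) [0] \<le> 1" using hd_le_len[of "take 1 (drop (l+m) x)" "[0]"] by simp
  have e: "l+m+1 = n-\<kappa>+1" using m1 by simp
  have "int (hamming_dist x y) \<le> int d - 1"
    using h1 h2 h3 b3 hw hu take_x hd_self[of "replicate l (0::'a)"] e by simp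
  then have hd: "hamming_dist x y < d" by simp
  show "y \<in> T0 n l d x" unfolding T0_def using ly y0 yl hd by simp
  fix s assume s: "l+1 \<le> s" "s \<le> n-\<kappa>-l"
  show "\<not> zw l y s"
  proof
    assume z: "zw l y s"
    have "x!(s+k) = 0" if k: "k < l" for k
    proof -
      have "y!(s+k) = 0" using z k unfolding zw_def by blast
      moreover have "l \<le> s+k" "s+k-l < m" using k s m1 unfolding m_def by arith+
      moreover have "y!(s+k) = u!(s+k-l)" using yy lu calculation(2,3) by (simp add: nth_append)
      ultimately have "x!(l+(s+k-l)) = 0" using uz[of "s+k-l"] by simp
      then show ?thesis using s by simp
    qed
    then have "zw l x s" unfolding zw_def by simp
    then show False using x_props(5) s by blast
  qed
qed

lemma card_T1:
  assumes i: "l+2 \<le> i" "i \<le> n-\<kappa>-l+1"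
  shows "card (T1 l d x i j) = ((i-l-2) choose j) * (card (UNIV::'a set) - 2)^j *
     ((card (UNIV::'a set) - 1) * card (ballc (drop (i+l-1) x) (int d - int l - int j - 2)))"
proof -
  let ?U = "cube (take (i-l-2) (drop l x)) (\<lambda>k. Alt (x!(l+k))) j"
  let ?W = "ballc (drop (i+l-1) x) (int d - int l - int j - 2)"
  let ?V = "UNIV - {0::'a}"
  have lt: "length (take (i-l-2) (drop l x)) = i-l-2" using x_props(1) i by simp
  have lenU: "\<And>u. u \<in> ?U \<Longrightarrow> length u = i-l-2" using lt unfolding cube_def by simp
  have sub: "(?U \<times> ?V) \<times> ?W \<subseteq> {p. length (fst (fst p)) = i-l-2}"
  proof (rule subsetI)
    fix p assume p: "p \<in> (?U \<times> ?V) \<times> ?W"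
    have "fst p \<in> ?U \<times> ?V" using mem_Times_iff[THEN iffD1, OF p] by (rule conjunct1)
    have "fst (fst p) \<in> ?U" using mem_Times_iff[THEN iffD1, OF \<open>fst p \<in> ?U \<times> ?V\<close>] by (rule conjunct1)
    then have "length (fst (fst p)) = i-l-2" by (rule lenU)
    then show "p \<in> {p. length (fst (fst p)) = i-l-2}" by (rule CollectI)
  qed
  have inj: "inj_on (mk1 l) ((?U \<times> ?V) \<times> ?W)"
    by (rule inj_on_subset[OF inj_mk1 sub])
  have "card (T1 l d x i j) = card ((?U \<times> ?V) \<times> ?W)"
    unfolding T1_def by (rule card_image[OF inj])
  also have "\<dots> = card ?U * card ?V * card ?W"
    by (simp only: card_cartesian_product)
  finally have c1: "card (T1 l d x i j) = card ?U * card ?V * card ?W" .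
  have cV: "card ?V = card (UNIV::'a set) - 1" by (rule card_UNIV_minus1)
  have cU: "card ?U = ((i-l-2) choose j) * (card (UNIV::'a set) - 2)^j"
  proof -
    have h: "\<forall>k<length (take (i-l-2) (drop l x)). take (i-l-2) (drop l x) ! k \<notin> Alt (x!(l+k)) \<and> card (Alt (x!(l+k))) = card (UNIV::'a set) - 2"
    proof (intro allI impI conjI)
      fix k assume k: "k < length (take (i-l-2) (drop l x))"
      then have "take (i-l-2) (drop l x) ! k = x!(l+k)" using lt x_props(1) i by simp
      then show "take (i-l-2) (drop l x) ! k \<notin> Alt (x!(l+k))" using Alt_props(1) by simp
      show "card (Alt (x!(l+k))) = card (UNIV::'a set) - 2" by (rule card_Alt)
    qed
    show ?thesis using card_cube[OF h] lt by simp
  qed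
  show ?thesis unfolding c1 cV cU by (simp only: mult.assoc)
qed

lemma card_T2:
  shows "card (T2 n \<kappa> l d x j) = ((n-\<kappa>-l) choose j) * (card (UNIV::'a set) - 2)^j *
      card (ballc (drop (n-\<kappa>+1) x) (int d - int j - 2))"
proof -
  let ?U = "cube (take (n-\<kappa>-l) (drop l x)) (\<lambda>k. Alt (x!(l+k))) j"
  let ?W = "ballc (drop (n-\<kappa>+1) x) (int d - int j - 2)"
  have lt: "length (take (n-\<kappa>-l) (drop l x)) = n-\<kappa>-l" using x_props(1) by simp
  have lenU: "\<And>u. u \<in> ?U \<Longrightarrow> length u = n-\<kappa>-l" using lt unfolding cube_def by simp
  have sub: "?U \<times> ?W \<subseteq> {p. length (fst p) = n-\<kappa>-l}"
  proof (rule subsetI)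
    fix p assume p: "p \<in> ?U \<times> ?W"
    have "fst p \<in> ?U" using mem_Times_iff[THEN iffD1, OF p] by (rule conjunct1)
    then have "length (fst p) = n-\<kappa>-l" by (rule lenU)
    then show "p \<in> {p. length (fst p) = n-\<kappa>-l}" by (rule CollectI)
  qed
  have inj: "inj_on (mk2 l) (?U \<times> ?W)"
    by (rule inj_on_subset[OF inj_mk2 sub])
  have "card (T2 n \<kappa> l d x j) = card (?U \<times> ?W)"
    unfolding T2_def by (rule card_image[OF inj])
  also have "\<dots> = card ?U * card ?W"
    by (simp only: card_cartesian_product)
  finally have c1: "card (T2 n \<kappa> l d x j) = card ?U * card ?W" .
  have cU: "card ?U = ((n-\<kappa>-l) choose j) * (card (UNIV::'a set) - 2)^j"
  proof -
    have h: "\<forall>k<length (take (n-\<kappa>-l) (drop l x)). take (n-\<kappa>-l) (drop l x) ! k \<notin> Alt (x!(l+k)) \<and> card (Alt (x!(l+k))) = card (UNIV::'a set) - 2"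
    proof (intro allI impI conjI)
      fix k assume k: "k < length (take (n-\<kappa>-l) (drop l x))"
      then have "take (n-\<kappa>-l) (drop l x) ! k = x!(l+k)" using lt x_props(1) by simp
      then show "take (n-\<kappa>-l) (drop l x) ! k \<notin> Alt (x!(l+k))" using Alt_props(1) by simp
      show "card (Alt (x!(l+k))) = card (UNIV::'a set) - 2" by (rule card_Alt)
    qed
    show ?thesis using card_cube[OF h] lt by simp
  qed
  show ?thesis unfolding c1 cU ..
qed

end


context
  fixes n \<kappa> l d :: nat and x :: "'a::{field,finite} list"
  assumes A: "1 \<le> l" "1 \<le> \<kappa>" "2*l + 1 + \<kappa> \<le> n" "0 < d" and xS: "x \<in> Sset n \<kappa> l"
begin

lemma card_T0:
  "real (card (T0 n l d x)) \<le> vol (card (UNIV::'a set)) (n-l-1) (int d - 1)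
      + (real (card (UNIV::'a set)) - 2) * vol (card (UNIV::'a set)) (n-l-1) (int d - 2)"
proof -
  let ?q = "card (UNIV::'a set)"
  let ?xw = "drop (l+1) x"
  let ?B1 = "ballc ?xw (int d - 1)"
  let ?B2 = "ballc ?xw (int d - 2)"
  let ?f = "\<lambda>w. replicate l (0::'a) @ [x!l] @ w"
  let ?g = "\<lambda>p. replicate l (0::'a) @ [fst p] @ snd p"
  have lx: "length x = n" using x_props[OF A xS] by simp
  have xl: "x!l \<noteq> 0" using x_props[OF A xS] by simp
  have lxw: "length ?xw = n-l-1" using lx by simp
  have dx: "drop l x = x!l # ?xw" using lx A by (simp add: Cons_nth_drop_Suc)
  have sub: "T0 n l d x \<subseteq> ?f ` ?B1 \<union> ?g ` (Alt (x!l) \<times> ?B2)"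
  proof
    fix y assume y: "y \<in> T0 n l d x"
    have ly: "length y = n" and y0: "\<forall>k<l. y!k = 0" and yl: "y!l \<noteq> 0" and hd: "hamming_dist x y < d"
      using y unfolding T0_def by auto
    define w where "w = drop (l+1) y"
    define c where "c = y!l"
    have tly: "take l y = replicate l 0" by (rule nth_equalityI) (use ly y0 A in auto)
    have dy: "drop l y = c # w" using ly A unfolding w_def c_def by (simp add: Cons_nth_drop_Suc)
    have yeq: "y = replicate l 0 @ [c] @ w"
      using append_take_drop_id[of l y] tly dy by simp
    have lw: "length w = length ?xw" using ly lx unfolding w_def by simp
    have L: "length x = length (replicate l (0::'a)) + length ([c] @ w)" using lx lw A by simp
    have "hamming_dist x y = hamming_dist (take l x) (replicate l 0) + hamming_dist (drop l x) ([c] @ w)"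
      using hd_split[OF L] unfolding yeq by simp
    also have "hamming_dist (drop l x) ([c] @ w) = hamming_dist [x!l] [c] + hamming_dist ?xw w"
      unfolding dx using hd_append[of "[x!l]" "[c]" ?xw w] by simp
    finally have h: "hamming_dist x y = (if x!l = c then 0 else 1) + hamming_dist ?xw w"
      using take_x[OF A xS] by (simp add: hd_self hd_single)
    show "y \<in> ?f ` ?B1 \<union> ?g ` (Alt (x!l) \<times> ?B2)"
    proof (cases "c = x!l")
      case True
      then have "int (hamming_dist ?xw w) \<le> int d - 1" using h hd by simp
      then have "w \<in> ?B1" using lw unfolding ballc_def by simp
      moreover have "y = ?f w" using yeq True by simp
      ultimately show ?thesis by (intro UnI1 image_eqI)
    next
      case False
      then have "int (hamming_dist ?xw w) \<le> int d - 2" using h hd by simp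
      then have "w \<in> ?B2" using lw unfolding ballc_def by simp
      moreover have "c \<in> Alt (x!l)" using False yl xl unfolding Alt_def c_def by auto
      moreover have "y = ?g (c, w)" using yeq by simp
      ultimately show ?thesis by (intro UnI2 image_eqI[of y ?g "(c,w)"]) simp_all
    qed
  qed
  have "card (T0 n l d x) \<le> card (?f ` ?B1 \<union> ?g ` (Alt (x!l) \<times> ?B2))"
    by (rule card_mono[OF _ sub]) (simp add: finite_ballc)
  also have "\<dots> \<le> card (?f ` ?B1) + card (?g ` (Alt (x!l) \<times> ?B2))" by (rule card_Un_le)
  also have "\<dots> \<le> card ?B1 + card (Alt (x!l) \<times> ?B2)" by (intro add_mono card_image_le) (simp_all add: finite_ballc)
  also have "\<dots> = card ?B1 + (?q - 2) * card ?B2" by (simp add: card_cartesian_product card_Alt)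
  finally have "real (card (T0 n l d x)) \<le> real (card ?B1) + real (?q - 2) * real (card ?B2)"
    by (metis of_nat_add of_nat_le_iff of_nat_mult)
  moreover have "real (?q - 2) = real ?q - 2"
  proof -
    have "2 \<le> ?q" by (rule card_q_ge2)
    then show ?thesis by (simp add: of_nat_diff)
  qed
  ultimately show ?thesis using card_ballc[of ?xw] lxw by simp
qed

lemma cube_len: "u \<in> cube (take m (drop l x)) A j \<Longrightarrow> m \<le> n - l \<Longrightarrow> length u = m"
  using x_props[OF A xS] unfolding cube_def by simp

lemma T1_disj:
  assumes i: "l+2 \<le> i" "i \<le> n-\<kappa>-l+1" and i': "l+2 \<le> i'" "i' \<le> n-\<kappa>-l+1"
    and ne: "(i,j) \<noteq> (i',j')" and y: "y \<in> T1 l d x i j" "y \<in> T1 l d x i' j'"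
  shows False
proof (cases "i = i'")
  case False
  show False
  proof (cases "i < i'")
    case True
    have "zw l y (i-1)" using T1_props(2)[OF A xS i y(1)] .
    moreover have "\<not> zw l y (i-1)" using T1_props(3)[OF A xS i' y(2), of "i-1"] True i by linarith
    ultimately show False by simp
  next
    case False
    then have "i' < i" using \<open>i \<noteq> i'\<close> by simp
    have "zw l y (i'-1)" using T1_props(2)[OF A xS i' y(2)] .
    moreover have "\<not> zw l y (i'-1)" using T1_props(3)[OF A xS i y(1), of "i'-1"] \<open>i' < i\<close> i' by linarith
    ultimately show False by simp
  qed
next
  case True
  then have jj: "j \<noteq> j'" using ne by simp
  let ?P = "\<lambda>j. (cube (take (i-l-2) (drop l x)) (\<lambda>k. Alt (x!(l+k))) j \<times> (UNIV - {0})) \<times>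
       ballc (drop (i+l-1) x) (int d - int l - int j - 2)"
  obtain p where p: "p \<in> ?P j" and yp: "y = mk1 l p" using y(1) unfolding T1_def by (rule imageE)
  have y2: "y \<in> T1 l d x i j'" using y(2) True by simp
  obtain p' where p': "p' \<in> ?P j'" and yp': "y = mk1 l p'" using y2 unfolding T1_def by (rule imageE)
  have m: "i-l-2 \<le> n-l" using i by linarith
  have c1: "fst (fst p) \<in> cube (take (i-l-2) (drop l x)) (\<lambda>k. Alt (x!(l+k))) j"
    using p by (simp add: mem_Times_iff)
  have c2: "fst (fst p') \<in> cube (take (i-l-2) (drop l x)) (\<lambda>k. Alt (x!(l+k))) j'"
    using p' by (simp add: mem_Times_iff)
  have "p = p'"
  proof (rule inj_onD[OF inj_mk1[of l "i-l-2"]])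
    show "mk1 l p = mk1 l p'" using yp yp' by simp
    show "p \<in> {p. length (fst (fst p)) = i-l-2}" using cube_len[OF c1 m] by simp
    show "p' \<in> {p. length (fst (fst p)) = i-l-2}" using cube_len[OF c2 m] by simp
  qed
  then have "j = j'" using c1 c2 unfolding cube_def by simp
  then show False using jj by simp
qed

lemma T2_disj:
  assumes ne: "j \<noteq> j'" and y: "y \<in> T2 n \<kappa> l d x j" "y \<in> T2 n \<kappa> l d x j'"
  shows False
proof -
  let ?P = "\<lambda>j. cube (take (n-\<kappa>-l) (drop l x)) (\<lambda>k. Alt (x!(l+k))) j \<times> ballc (drop (n-\<kappa>+1) x) (int d - int j - 2)"
  obtain p where p: "p \<in> ?P j" and yp: "y = mk2 l p" using y(1) unfolding T2_def by (rule imageE)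
  obtain p' where p': "p' \<in> ?P j'" and yp': "y = mk2 l p'" using y(2) unfolding T2_def by (rule imageE)
  have m: "n-\<kappa>-l \<le> n-l" by simp
  have c1: "fst p \<in> cube (take (n-\<kappa>-l) (drop l x)) (\<lambda>k. Alt (x!(l+k))) j"
    using p by (simp add: mem_Times_iff)
  have c2: "fst p' \<in> cube (take (n-\<kappa>-l) (drop l x)) (\<lambda>k. Alt (x!(l+k))) j'"
    using p' by (simp add: mem_Times_iff)
  have "p = p'"
  proof (rule inj_onD[OF inj_mk2[of l "n-\<kappa>-l"]])
    show "mk2 l p = mk2 l p'" using yp yp' by simp
    show "p \<in> {p. length (fst p) = n-\<kappa>-l}" using cube_len[OF c1 m] by simp
    show "p' \<in> {p. length (fst p) = n-\<kappa>-l}" using cube_len[OF c2 m] by simp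
  qed
  then have "j = j'" using c1 c2 unfolding cube_def by simp
  then show False using ne by simp
qed

lemma ball_bound:
  defines "q \<equiv> card (UNIV::'a set)"
  shows "real (card {y \<in> Sset n \<kappa> l. hamming_dist x y < d}) \<le>
         (vol q (n - l - 1) (int d - 1) + (real q - 2) * vol q (n - l - 1) (int d - 2))
         - (real q - 1) * (\<Sum>i = l + 2..n - \<kappa> - l + 1. \<Sum>j = 0..i - l - 2.
               real ((i - l - 2) choose j) * (real q - 2) ^ j *
               vol q (n - i - l + 1) (int d - int l - int j - 2))
         - (\<Sum>i = 0..n - \<kappa> - l.
               real ((n - \<kappa> - l) choose i) * (real q - 2) ^ i * vol q (\<kappa> - 1) (int d - int i - 2))"
proof -
  define I1 where "I1 = Sigma {l+2..n-\<kappa>-l+1} (\<lambda>i. {0..i-l-2})"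
  define U1 where "U1 = (\<Union>p\<in>I1. T1 l d x (fst p) (snd p))"
  define J2 where "J2 = {0..n-\<kappa>-l}"
  define U2 where "U2 = (\<Union>j\<in>J2. T2 n \<kappa> l d x j)"
  define Bl where "Bl = {y \<in> Sset n \<kappa> l. hamming_dist x y < d}"
  have finT0: "finite (T0 n l d x :: 'a list set)" by (rule finite_len_sub[of _ n]) (auto simp: T0_def)
  have I1i: "l+2 \<le> fst p" "fst p \<le> n-\<kappa>-l+1" if "p \<in> I1" for p using that unfolding I1_def by auto
  have sT1: "T1 l d x (fst p) (snd p) \<subseteq> T0 n l d x" if "p \<in> I1" for p
    using T1_props(1)[OF A xS I1i[OF that]] by blast
  have sT2: "T2 n \<kappa> l d x j \<subseteq> T0 n l d x" for j
    using T2_props(1)[OF A xS] by blast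
  have sB: "Bl \<subseteq> T0 n l d x" unfolding Bl_def Sset_def T0_def by auto
  have U1T: "U1 \<subseteq> T0 n l d x" unfolding U1_def using sT1 by blast
  have U2T: "U2 \<subseteq> T0 n l d x" unfolding U2_def using sT2 by blast
  have fin: "finite Bl" "finite U1" "finite U2"
    using finite_subset[OF sB finT0] finite_subset[OF U1T finT0] finite_subset[OF U2T finT0] by auto
  have d1: "Bl \<inter> U1 = {}"
  proof (rule ccontr)
    assume "Bl \<inter> U1 \<noteq> {}"
    then obtain y p where y: "y \<in> Bl" and p: "p \<in> I1" and yp: "y \<in> T1 l d x (fst p) (snd p)"
      unfolding U1_def by blast
    have "zw l y (fst p - 1)" using T1_props(2)[OF A xS I1i[OF p] yp] .
    moreover have "\<not> zw l y (fst p - 1)"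
    proof -
      have "\<forall>s. l+1 \<le> s \<and> s \<le> n-\<kappa>-l \<longrightarrow> \<not> zw l y s" using y unfolding Bl_def Sset_def by auto
      moreover have "l+1 \<le> fst p - 1" "fst p - 1 \<le> n-\<kappa>-l" using I1i[OF p] by linarith+
      ultimately show ?thesis by blast
    qed
    ultimately show False by simp
  qed
  have d2: "Bl \<inter> U2 = {}"
  proof (rule ccontr)
    assume "Bl \<inter> U2 \<noteq> {}"
    then obtain y j where y: "y \<in> Bl" and yp: "y \<in> T2 n \<kappa> l d x j"
      unfolding U2_def by blast
    have "y!(n-\<kappa>) = 0" using T2_props(2)[OF A xS yp] .
    moreover have "y!(n-\<kappa>) \<noteq> 0" using y unfolding Bl_def Sset_def by auto
    ultimately show False by simp
  qed
  have d3: "U1 \<inter> U2 = {}"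
  proof (rule ccontr)
    assume "U1 \<inter> U2 \<noteq> {}"
    then obtain y p j where p: "p \<in> I1" and y1: "y \<in> T1 l d x (fst p) (snd p)" and y2: "y \<in> T2 n \<kappa> l d x j"
      unfolding U1_def U2_def by blast
    have "zw l y (fst p - 1)" using T1_props(2)[OF A xS I1i[OF p] y1] .
    moreover have "\<not> zw l y (fst p - 1)" using T2_props(3)[OF A xS y2, of "fst p - 1"] I1i[OF p] by linarith
    ultimately show False by simp
  qed
  have "card Bl + card U1 + card U2 = card (Bl \<union> U1 \<union> U2)"
    using fin d1 d2 d3 by (simp add: card_Un_disjoint Int_Un_distrib2)
  also have "\<dots> \<le> card (T0 n l d x)" by (rule card_mono[OF finT0]) (use sB U1T U2T in blast)
  finally have main: "real (card Bl) + real (card U1) + real (card U2) \<le> real (card (T0 n l d x))"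
    by (metis of_nat_add of_nat_le_iff)
  have q2: "real (q - 2) = real q - 2" "real (q - 1) = real q - 1"
  proof -
    have "2 \<le> q" unfolding q_def by (rule card_q_ge2)
    then show "real (q - 2) = real q - 2" "real (q - 1) = real q - 1" by (simp_all add: of_nat_diff)
  qed
  have cU1: "card U1 = (\<Sum>p\<in>I1. card (T1 l d x (fst p) (snd p)))"
    unfolding U1_def
  proof (rule card_UN_disjoint)
    show "finite I1" unfolding I1_def by simp
    show "\<forall>p\<in>I1. finite (T1 l d x (fst p) (snd p))" using sT1 finT0 finite_subset by blast
    show "\<forall>p\<in>I1. \<forall>p'\<in>I1. p \<noteq> p' \<longrightarrow> T1 l d x (fst p) (snd p) \<inter> T1 l d x (fst p') (snd p') = {}"
    proof (intro ballI impI)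
      fix p p' assume p: "p \<in> I1" and p': "p' \<in> I1" and ne: "p \<noteq> p'"
      show "T1 l d x (fst p) (snd p) \<inter> T1 l d x (fst p') (snd p') = {}"
      proof (rule ccontr)
        assume "T1 l d x (fst p) (snd p) \<inter> T1 l d x (fst p') (snd p') \<noteq> {}"
        then obtain y where "y \<in> T1 l d x (fst p) (snd p)" "y \<in> T1 l d x (fst p') (snd p')" by blast
        moreover have "(fst p, snd p) \<noteq> (fst p', snd p')" using ne by (simp add: prod_eq_iff)
        ultimately show False using T1_disj[OF I1i[OF p] I1i[OF p']] by blast
      qed
    qed
  qed
  have cU2: "card U2 = (\<Sum>j\<in>J2. card (T2 n \<kappa> l d x j))"
    unfolding U2_def
  proof (rule card_UN_disjoint)
    show "finite J2" unfolding J2_def by simp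
    show "\<forall>j\<in>J2. finite (T2 n \<kappa> l d x j)" using sT2 finT0 finite_subset by blast
    show "\<forall>j\<in>J2. \<forall>j'\<in>J2. j \<noteq> j' \<longrightarrow> T2 n \<kappa> l d x j \<inter> T2 n \<kappa> l d x j' = {}"
      using T2_disj by blast
  qed
  have lx: "length x = n" using x_props[OF A xS] by simp
  have eT1: "real (card (T1 l d x i j)) = (real q - 1) * (real ((i - l - 2) choose j) * (real q - 2) ^ j *
               vol q (n - i - l + 1) (int d - int l - int j - 2))"
    if i: "l+2 \<le> i" "i \<le> n-\<kappa>-l+1" for i j
  proof -
    have len: "length (drop (i+l-1) x) = n - i - l + 1" using lx i A by simp
    show ?thesis using card_T1[OF A xS i, of j] card_ballc[of "drop (i+l-1) x"] len q2
      unfolding q_def by (simp add: algebra_simps)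
  qed
  have eT2: "real (card (T2 n \<kappa> l d x j)) = real ((n - \<kappa> - l) choose j) * (real q - 2) ^ j * vol q (\<kappa> - 1) (int d - int j - 2)" for j
  proof -
    have len: "length (drop (n-\<kappa>+1) x) = \<kappa> - 1" using lx A by simp
    show ?thesis using card_T2[OF A xS, of j] card_ballc[of "drop (n-\<kappa>+1) x"] len q2
      unfolding q_def by (simp add: algebra_simps)
  qed
  have L1: "real (card U1) = (real q - 1) * (\<Sum>i = l + 2..n - \<kappa> - l + 1. \<Sum>j = 0..i - l - 2.
               real ((i - l - 2) choose j) * (real q - 2) ^ j *
               vol q (n - i - l + 1) (int d - int l - int j - 2))"
  proof -
    have "real (card U1) = (\<Sum>p\<in>I1. real (card (T1 l d x (fst p) (snd p))))" unfolding cU1 by simp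
    also have "\<dots> = (\<Sum>i = l + 2..n - \<kappa> - l + 1. \<Sum>j = 0..i - l - 2. real (card (T1 l d x i j)))"
      unfolding I1_def by (subst sum.Sigma) (simp_all add: case_prod_beta)
    also have "\<dots> = (\<Sum>i = l + 2..n - \<kappa> - l + 1. \<Sum>j = 0..i - l - 2. (real q - 1) * (real ((i - l - 2) choose j) * (real q - 2) ^ j *
               vol q (n - i - l + 1) (int d - int l - int j - 2)))"
      by (intro sum.cong refl) (simp add: eT1)
    finally show ?thesis by (simp only: sum_distrib_left)
  qed
  have L2: "real (card U2) = (\<Sum>i = 0..n - \<kappa> - l.
               real ((n - \<kappa> - l) choose i) * (real q - 2) ^ i * vol q (\<kappa> - 1) (int d - int i - 2))"
    unfolding cU2 J2_def by (simp add: eT2)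
  have L0: "real (card (T0 n l d x)) \<le> vol q (n - l - 1) (int d - 1) + (real q - 2) * vol q (n - l - 1) (int d - 2)"
    unfolding q_def by (rule card_T0)
  show ?thesis using main L0 L1 L2 unfolding Bl_def by linarith
qed

end


lemma greedy:
  fixes S :: "'a list set"
  assumes fin: "finite S" and len: "\<forall>y\<in>S. length y = n" and d: "0 < d"
    and bnd: "\<forall>x\<in>S. real (card {y\<in>S. hamming_dist x y < d}) \<le> D"
  shows "\<exists>C\<subseteq>S. min_dist_ge C d \<and> real (card S) \<le> real (card C) * D"
proof -
  define F where "F = {C. C \<subseteq> S \<and> min_dist_ge C d}"
  have "F \<subseteq> Pow S" unfolding F_def by blast
  then have "finite F" using fin by (meson finite_Pow_iff finite_subset)
  moreover have "{} \<in> F" unfolding F_def min_dist_ge_def by simp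
  then have "F \<noteq> {}" by blast
  ultimately have "\<exists>C\<in>F. \<forall>b\<in>F. C \<subseteq> b \<longrightarrow> C = b" by (rule finite_has_maximal)
  then obtain C where C: "C \<in> F" and mx: "\<forall>b\<in>F. C \<subseteq> b \<longrightarrow> C = b" by blast
  have CS: "C \<subseteq> S" and Cd: "min_dist_ge C d" using C unfolding F_def by auto
  have cov: "S \<subseteq> (\<Union>c\<in>C. {y\<in>S. hamming_dist c y < d})"
  proof
    fix y assume y: "y \<in> S"
    show "y \<in> (\<Union>c\<in>C. {y\<in>S. hamming_dist c y < d})"
    proof (rule ccontr)
      assume nc: "y \<notin> (\<Union>c\<in>C. {y\<in>S. hamming_dist c y < d})"
      have far: "\<forall>c\<in>C. d \<le> hamming_dist c y"
      proof
        fix c assume "c \<in> C"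
        show "d \<le> hamming_dist c y"
        proof (rule ccontr)
          assume "\<not> d \<le> hamming_dist c y"
          then have "y \<in> {y\<in>S. hamming_dist c y < d}" using y by simp
          then show False using nc \<open>c \<in> C\<close> by blast
        qed
      qed
      have yC: "y \<notin> C"
      proof
        assume "y \<in> C"
        then have "d \<le> hamming_dist y y" using far by blast
        then show False using d hd_self[of y] by simp
      qed
      have "insert y C \<in> F"
        unfolding F_def min_dist_ge_def
      proof (intro CollectI conjI ballI impI)
        show "insert y C \<subseteq> S" using y CS by simp
        fix a b assume a: "a \<in> insert y C" and b: "b \<in> insert y C" and ab: "a \<noteq> b"
        show "d \<le> hamming_dist a b"
        proof (cases "a = y")
          case True
          then have "b \<in> C" using b ab by simp
          then have "d \<le> hamming_dist b y" using far by simp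
          moreover have "hamming_dist b y = hamming_dist y b" using len y CS \<open>b \<in> C\<close> by (intro hd_sym) auto
          ultimately show ?thesis using True by simp
        next
          case False
          then have aC: "a \<in> C" using a by simp
          show ?thesis
          proof (cases "b = y")
            case True
            then show ?thesis using far aC by simp
          next
            case False
            then have "b \<in> C" using b by simp
            then show ?thesis using Cd aC ab unfolding min_dist_ge_def by simp
          qed
        qed
      qed
      then have "C = insert y C" using mx by (meson subset_insertI)
      then show False using yC by blast
    qed
  qed
  have finC: "finite C" using CS fin finite_subset by blast
  have finU: "finite (\<Union>c\<in>C. {y\<in>S. hamming_dist c y < d})"
    by (rule finite_subset[OF _ fin]) blast
  have "card S \<le> card (\<Union>c\<in>C. {y\<in>S. hamming_dist c y < d})"
    by (rule card_mono[OF finU cov])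
  also have "\<dots> \<le> (\<Sum>c\<in>C. card {y\<in>S. hamming_dist c y < d})" by (rule card_UN_le[OF finC])
  finally have "real (card S) \<le> real (\<Sum>c\<in>C. card {y\<in>S. hamming_dist c y < d})"
    by (rule of_nat_mono)
  also have "\<dots> = (\<Sum>c\<in>C. real (card {y\<in>S. hamming_dist c y < d}))" by (rule of_nat_sum)
  also have "\<dots> \<le> (\<Sum>c\<in>C. D)"
  proof (rule sum_mono)
    fix c assume "c \<in> C"
    then have "c \<in> S" using CS by blast
    then show "real (card {y\<in>S. hamming_dist c y < d}) \<le> D" using bnd by blast
  qed
  also have "\<dots> = real (card C) * D" by simp
  finally have "real (card S) \<le> real (card C) * D" .
  then show ?thesis using CS Cd by (intro exI[of _ C] conjI)
qed

lemma final_ineq: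
  fixes q N W X :: real
  assumes q: "q \<ge> 2" and N: "N \<ge> 1" and X: "2*N \<le> X" "X \<le> 2*q*N" and W: "0 \<le> W" "W \<le> N - 1"
  shows "(2*q - 1) * X^2 \<le> 4*q^2*N*(X - W)"
proof -
  have h1: "0 \<le> (X - 2*N) * (2*q*N - X)" using X by simp
  have h2: "0 \<le> (2*q - 1) * ((X - 2*N) * (2*q*N - X))" using h1 q by simp
  have h3: "0 \<le> (q - 1) * N * (2*q*N - X)" using X q N by simp
  have h4: "0 \<le> q^2 * N * (N - 1 - W)" using W N by simp
  have h5: "0 \<le> q^2 * N" using N by simp
  have e: "4*q^2*N*(X - W) - (2*q - 1) * X^2 = (2*q - 1) * ((X - 2*N) * (2*q*N - X)) + 2*((q - 1) * N * (2*q*N - X))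
      + 4*(q^2 * N * (N - 1 - W)) + 4*(q^2 * N)"
    by (simp add: algebra_simps power2_eq_square)
  show ?thesis using e h2 h3 h4 h5 by linarith
qed

lemma log_bounds:
  fixes q :: nat and N :: real
  assumes q: "2 \<le> q" and N: "1 \<le> N" and l: "l = nat \<lceil>log (real q) (2 * N)\<rceil>"
  shows "1 \<le> l" "2 * N \<le> real q ^ l" "real q ^ l \<le> 2 * real q * N"
proof -
  let ?Lg = "log (real q) (2 * N)"
  have q1: "1 < real q" using q by simp
  have pos: "0 < ?Lg" using q1 N by simp
  have cl: "real l = of_int \<lceil>?Lg\<rceil>" using l pos by simp
  have c0: "0 < \<lceil>?Lg\<rceil>" using pos by simp
  have "int l = \<lceil>?Lg\<rceil>" using l c0 by simp
  then show "1 \<le> l" using c0 by linarith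
  have a: "?Lg \<le> real l" using cl by simp
  have b: "real l \<le> ?Lg + 1" using cl by simp
  have e: "real q powr ?Lg = 2 * N" using q1 N by simp
  have f: "real q powr real l = real q ^ l" using q1 by (simp add: powr_realpow)
  have "real q powr ?Lg \<le> real q powr real l" using a q1 by simp
  then show "2 * N \<le> real q ^ l" using e f by simp
  have "real q powr real l \<le> real q powr (?Lg + 1)" using b q1 by simp
  also have "\<dots> = 2 * N * real q" using e q1 by (simp add: powr_add)
  finally show "real q ^ l \<le> 2 * real q * N" using f by (simp add: algebra_simps)
qed

theorem theorem4:
  fixes q n \<kappa> d l :: nat
  assumes "card (UNIV :: 'a::{field,finite} set) = q"
    and "q \<in> {2, 4}"
    and "1 \<le> \<kappa>" "\<kappa> < n" "0 < d"
    and "l = nat \<lceil>log (real q) (2 * real (n - \<kappa> + 1))\<rceil>"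
    and "n - \<kappa> - 1 \<ge> 2 * l"
  shows "\<exists>C :: 'a list set. C \<subseteq> {w. length w = n} \<and> is_WMU \<kappa> n C \<and> min_dist_ge C d \<and>
     real (card C) \<ge>
       ((real q - 1)^2 * (2 * real q - 1) / (4 * real q ^ 4)) * real q ^ n /
       (real (n - \<kappa> + 1) *
         ( (vol q (n - l - 1) (int d - 1) + (real q - 2) * vol q (n - l - 1) (int d - 2))
         - (real q - 1) * (\<Sum>i = l + 2..n - \<kappa> - l + 1. \<Sum>j = 0..i - l - 2.
               real ((i - l - 2) choose j) * (real q - 2) ^ j *
               vol q (n - i - l + 1) (int d - int l - int j - 2))
         - (\<Sum>i = 0..n - \<kappa> - l.
               real ((n - \<kappa> - l) choose i) * (real q - 2) ^ i * vol q (\<kappa> - 1) (int d - int i - 2))))"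
proof -
  define D where "D = ( (vol q (n - l - 1) (int d - 1) + (real q - 2) * vol q (n - l - 1) (int d - 2))
         - (real q - 1) * (\<Sum>i = l + 2..n - \<kappa> - l + 1. \<Sum>j = 0..i - l - 2.
               real ((i - l - 2) choose j) * (real q - 2) ^ j *
               vol q (n - i - l + 1) (int d - int l - int j - 2))
         - (\<Sum>i = 0..n - \<kappa> - l.
               real ((n - \<kappa> - l) choose i) * (real q - 2) ^ i * vol q (\<kappa> - 1) (int d - int i - 2)))"
  define cq where "cq = (real q - 1)^2 * (2 * real q - 1) / (4 * real q ^ 4)"
  define S where "S = (Sset n \<kappa> l :: 'a list set)"
  have qa: "card (UNIV :: 'a set) = q" by fact
  have q2: "2 \<le> q" using card_q_ge2[where 'a='a] qa by simp
  have k: "1 \<le> \<kappa>" "\<kappa> < n" "0 < d" using assms by auto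
  have N1: "1 \<le> real (n - \<kappa> + 1)" by simp
  have lb: "1 \<le> l" "2 * real (n - \<kappa> + 1) \<le> real q ^ l" "real q ^ l \<le> 2 * real q * real (n - \<kappa> + 1)"
    using log_bounds[OF q2 N1 assms(6)] by auto
  have hl: "2*l + 1 + \<kappa> \<le> n" using assms(7) k by linarith
  have A: "1 \<le> l" "1 \<le> \<kappa>" "2*l + 1 + \<kappa> \<le> n" "0 < d" using lb hl k by auto
  define Q where "Q = real q"
  define P where "P = Q ^ (n - 2*l - 2)"
  define X where "X = Q ^ l"
  define W where "W = real (n - \<kappa> - 2*l)"
  define NN where "NN = real (n - \<kappa> + 1)"
  have Qge: "2 \<le> Q" using q2 unfolding Q_def by simp
  have Ppos: "0 < P" using Qge unfolding P_def by simp
  have e1: "real ((q - 1)^2 * q^(n-l-2)) = (Q - 1)^2 * (P * X)"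
  proof -
    have "n - l - 2 = (n - 2*l - 2) + l" using hl k(1) by arith
    then have "Q^(n-l-2) = P * X" unfolding P_def X_def by (simp add: power_add)
    then show ?thesis using q2 unfolding Q_def by (simp add: of_nat_diff)
  qed
  have e2: "real ((q - 1)^2 * q^(n-2*l-2)) = (Q - 1)^2 * P"
    using q2 unfolding Q_def P_def by (simp add: of_nat_diff)
  have e3: "Q ^ n = P * X^2 * Q^2"
  proof -
    have "n = (n - 2*l - 2) + l + l + 2" using hl k(1) by arith
    then have "Q ^ n = Q^(n - 2*l - 2) * Q^l * Q^l * Q^2" by (metis power_add)
    then show ?thesis unfolding P_def X_def by (simp add: power2_eq_square)
  qed
  have cSl: "(Q - 1)^2 * (P * X) - W * ((Q - 1)^2 * P) \<le> real (card S)"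
    using card_S_lower[OF A(1) A(2) A(3), where 'a='a] qa e1 e2 unfolding S_def W_def by simp
  have Wb: "0 \<le> W" "W \<le> NN - 1" unfolding W_def NN_def by auto
  have Xb: "2 * NN \<le> X" "X \<le> 2 * Q * NN" using lb unfolding X_def NN_def Q_def by auto
  have NNp: "1 \<le> NN" unfolding NN_def by simp
  have fi: "(2*Q - 1) * X^2 \<le> 4*Q^2*NN*(X - W)" by (rule final_ineq[OF Qge NNp Xb Wb])
  have cS: "cq * Q ^ n / NN \<le> real (card S)"
  proof -
    have pos4: "0 < 4*Q^2*NN" using Qge NNp by simp
    have r: "(2*Q - 1) * X^2 / (4*Q^2*NN) \<le> X - W" using fi pos4 by (simp add: divide_le_eq mult.commute)
    have "cq * Q ^ n / NN = (Q - 1)^2 * P * ((2*Q - 1) * X^2 / (4*Q^2*NN))"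
      unfolding cq_def e3 Q_def[symmetric] using Qge NNp by (simp add: field_simps power2_eq_square power4_eq_xxxx)
    also have "\<dots> \<le> (Q - 1)^2 * P * (X - W)" by (rule mult_left_mono[OF r]) (use Ppos in simp)
    also have "\<dots> = (Q - 1)^2 * (P * X) - W * ((Q - 1)^2 * P)" by (simp add: algebra_simps)
    finally show ?thesis using cSl by linarith
  qed
  have cSpos: "0 < real (card S)"
  proof -
    have "0 < cq" unfolding cq_def using Qge Q_def by simp
    moreover have "0 < Q ^ n" using Qge by simp
    ultimately have "0 < cq * Q ^ n / NN" using NNp by simp
    then show ?thesis using cS by linarith
  qed
  have finS: "finite S" unfolding S_def by (rule finite_len_sub[of _ n]) (auto simp: Sset_def)
  have lenS: "\<forall>y\<in>S. length y = n" unfolding S_def Sset_def by auto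
  have bnd: "\<forall>x\<in>S. real (card {y\<in>S. hamming_dist x y < d}) \<le> D"
  proof
    fix x assume x: "x \<in> S"
    show "real (card {y\<in>S. hamming_dist x y < d}) \<le> D"
      using ball_bound[OF A x[unfolded S_def]] qa unfolding S_def D_def by simp
  qed
  obtain C where CS: "C \<subseteq> S" and Cd: "min_dist_ge C d" and cC: "real (card S) \<le> real (card C) * D"
    using greedy[OF finS lenS k(3) bnd] by blast
  have Dpos: "1 \<le> D"
  proof -
    have "S \<noteq> {}" using cSpos by auto
    then obtain x where x: "x \<in> S" by blast
    have "x \<in> {y\<in>S. hamming_dist x y < d}" using x k(3) hd_self[of x] by simp
    moreover have "finite {y\<in>S. hamming_dist x y < d}" using finS by simp
    ultimately have "1 \<le> card {y\<in>S. hamming_dist x y < d}" using card_0_eq by fastforce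
    then show ?thesis using bnd x by fastforce
  qed
  have key: "cq * Q ^ n / (NN * D) \<le> real (card C)"
  proof -
    have "cq * Q ^ n / (NN * D) = (cq * Q ^ n / NN) / D" by simp
    also have "\<dots> \<le> real (card S) / D" by (rule divide_right_mono[OF cS]) (use Dpos in simp)
    also have "\<dots> \<le> real (card C)" using cC Dpos by (simp add: divide_le_eq)
    finally show ?thesis .
  qed
  have WMU: "is_WMU \<kappa> n C" using S_WMU[OF CS[unfolded S_def] k(1) k(2)] .
  have len: "C \<subseteq> {w. length w = n}" using CS lenS by auto
  show ?thesis
    using len WMU Cd key unfolding cq_def Q_def NN_def D_def by blast
qed

end
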